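(* Let $L\ge 2$ and let $f_{i,j}:\mathbb{R}\to\mathbb{R}$, $i,j=0,\ldots,L-1$, be continuous $1$-periodic functions. For each $i$ and $\boldsymbol{y}=(y_0,\ldots,y_{L-1})\in\mathbb{R}^L$ define $$g_i(\boldsymbol{y}) := \int_{[0,1]^L} \prod_{j=0}^{L-1} f_{i,j}\bigl(x_j - x_{j+1} + y_j\bigr)\,\mathrm{d}\boldsymbol{x},\qquad x_L\equiv x_0.$$ Let $$\mathcal{I} := \int_{[0,1]^L}\cdots\int_{[0,1]^L} \prod_{i=0}^{L-1} g_i\bigl(\boldsymbol{y}_{i+1}-\boldsymbol{y}_i\bigr)\,\mathrm{d}\boldsymbol{y}_0\cdots\mathrm{d}\boldsymbol{y}_{L-1},$$ where each $\boldsymbol{y}_i\in[0,1]^L$ and $\boldsymbol{y}_L\equiv\boldsymbol{y}_0$. Then $$\mathcal{I} = \int_{[0,1]^L} \prod_{i=0}^{L-1} g_i\bigl(y_{i+1}-y_i,\,0,\ldots,0\bigr)\,\mathrm{d}\boldsymbol{y},$$ where now $\boldsymbol{y}=(y_0,\ldots,y_{L-1})\in[0,1]^L$ with scalar components and $y_L\equiv y_0$.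
   Context: Indices of integration variables are taken modulo $L$ (periodic boundary conditions). *)

theory Defs
  imports "HOL-Analysis.Analysis"
begin

definition unit_cube :: "nat \<Rightarrow> (nat \<Rightarrow> real) measure" where
  "unit_cube L = PiM {..<L} (\<lambda>_. restrict_space lborel {0..1})"

definition gfun :: "nat \<Rightarrow> (nat \<Rightarrow> nat \<Rightarrow> real \<Rightarrow> real) \<Rightarrow> nat \<Rightarrow> (nat \<Rightarrow> real) \<Rightarrow> real" where
  "gfun L f i y = (\<integral>x. (\<Prod>j<L. f i j (x j - x ((j + 1) mod L) + y j)) \<partial>unit_cube L)"

end

theory Submission imports Defs "HOL-Probability.Probability_Measure" begin

abbreviation UU :: "real measure" where "UU \<equiv> restrict_space lborel {0..1}"

lemma space_UU[simp]: "space UU = {0..1}"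
  by (simp add: space_restrict_space)

lemma prob_UU: "prob_space UU"
proof (rule prob_spaceI)
  show "emeasure UU (space UU) = 1"
    by (subst emeasure_restrict_space) auto
qed

lemma meas_UU_id: "(\<lambda>t. t) \<in> measurable UU borel"
  by (metis measurable_lborel1 measurable_ident_sets measurable_restrict_space1 sets_lborel)

lemma sets_UU_borel: "A \<in> sets UU \<Longrightarrow> A \<in> sets borel"
  by (simp add: sets_restrict_space_iff)

lemma frac_meas[measurable]: "(frac :: real \<Rightarrow> real) \<in> borel_measurable borel"
  unfolding frac_def using borel_measurable_real_floor by (intro borel_measurable_diff) auto

lemma meas_into_UU:
  assumes "g \<in> borel_measurable M" "\<And>x. x \<in> space M \<Longrightarrow> g x \<in> {0..1}"
  shows "g \<in> measurable M UU"
  using assms by (intro measurable_restrict_space2) (auto simp: measurable_lborel2)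

lemma per_int:
  assumes "\<And>t. h (t + 1) = h t"
  shows "h (t + real_of_int k) = h t"
proof -
  have n: "h (s + real n) = h s" for s n
  proof (induction n)
    case (Suc n)
    have "s + real (Suc n) = (s + real n) + 1" by simp
    then show ?case using assms Suc by metis
  qed simp
  show ?thesis
  proof (cases "k \<ge> 0")
    case True then show ?thesis using n[of t "nat k"] by simp
  next
    case False
    then have "t = (t + real_of_int k) + real (nat (-k))" by simp
    then show ?thesis using n[of "t + real_of_int k" "nat (-k)"] by metis
  qed
qed

lemma nn_shift:
  fixes g :: "real \<Rightarrow> ennreal"
  assumes [measurable]: "g \<in> borel_measurable borel"
  shows "(\<integral>\<^sup>+ t. g (t + c) \<partial>lborel) = (\<integral>\<^sup>+ t. g t \<partial>lborel)"
proof -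
  have "(\<integral>\<^sup>+ t. g t \<partial>lborel) = (\<integral>\<^sup>+ t. g t \<partial>distr lborel borel ((+) c))"
    by (simp add: lborel_distr_plus)
  also have "\<dots> = (\<integral>\<^sup>+ t. g (c + t) \<partial>lborel)"
    by (subst nn_integral_distr) auto
  finally show ?thesis by (simp add: add.commute)
qed

lemma Q_int:
  fixes h :: "real \<Rightarrow> ennreal"
  assumes [measurable]: "h \<in> borel_measurable borel" and per: "\<And>t. h (t + 1) = h t"
  shows "(\<integral>\<^sup>+ t. h t * indicator {a..a+1} t \<partial>lborel)
       = (\<integral>\<^sup>+ t. h t * indicator {a + real_of_int k..a + real_of_int k+1} t \<partial>lborel)"
proof -
  have "(\<integral>\<^sup>+ t. h t * indicator {a + real_of_int k..a + real_of_int k+1} t \<partial>lborel)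
     = (\<integral>\<^sup>+ t. h (t + real_of_int k) * indicator {a + real_of_int k..a + real_of_int k+1} (t + real_of_int k) \<partial>lborel)"
    by (rule nn_shift[symmetric]) measurable
  also have "\<dots> = (\<integral>\<^sup>+ t. h t * indicator {a..a+1} t \<partial>lborel)"
    by (intro nn_integral_cong) (auto simp: per_int[of h, OF per] indicator_def)
  finally show ?thesis by simp
qed

lemma Q_frac:
  fixes h :: "real \<Rightarrow> ennreal"
  assumes [measurable]: "h \<in> borel_measurable borel" and per: "\<And>t. h (t + 1) = h t"
    and d: "0 \<le> d" "d < 1"
  shows "(\<integral>\<^sup>+ t. h t * indicator {d..d+1} t \<partial>lborel)
       = (\<integral>\<^sup>+ t. h t * indicator {0..1} t \<partial>lborel)"
proof -
  have "(\<integral>\<^sup>+ t. h t * indicator {d..d+1} t \<partial>lborel)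
      = (\<integral>\<^sup>+ t. h t * indicator {d..1} t + h t * indicator {1<..d+1} t \<partial>lborel)"
    using d by (intro nn_integral_cong) (auto simp: indicator_def)
  also have "\<dots> = (\<integral>\<^sup>+ t. h t * indicator {d..1} t \<partial>lborel) + (\<integral>\<^sup>+ t. h t * indicator {1<..d+1} t \<partial>lborel)"
    by (rule nn_integral_add) auto
  also have "(\<integral>\<^sup>+ t. h t * indicator {1<..d+1} t \<partial>lborel)
      = (\<integral>\<^sup>+ t. h (t+1) * indicator {1<..d+1} (t+1) \<partial>lborel)"
    by (rule nn_shift[symmetric]) measurable
  also have "\<dots> = (\<integral>\<^sup>+ t. h t * indicator {0<..d} t \<partial>lborel)"
    by (intro nn_integral_cong) (auto simp: per indicator_def)
  also have "(\<integral>\<^sup>+ t. h t * indicator {d..1} t \<partial>lborel) + (\<integral>\<^sup>+ t. h t * indicator {0<..d} t \<partial>lborel)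
      = (\<integral>\<^sup>+ t. h t * indicator {d..1} t + h t * indicator {0<..d} t \<partial>lborel)"
    by (rule nn_integral_add[symmetric]) auto
  also have "\<dots> = (\<integral>\<^sup>+ t. h t * indicator {0..1} t \<partial>lborel)"
  proof (rule nn_integral_cong_AE)
    show "AE t in lborel. h t * indicator {d..1} t + h t * indicator {0<..d} t = h t * indicator {0..1} t"
      using AE_lborel_singleton[of 0] AE_lborel_singleton[of d]
    proof eventually_elim
      case (elim t) then show ?case using d by (auto simp: indicator_def)
    qed
  qed
  finally show ?thesis .
qed

lemma PER:
  fixes h :: "real \<Rightarrow> ennreal"
  assumes [measurable]: "h \<in> borel_measurable borel" and per: "\<And>t. h (t + 1) = h t"
  shows "(\<integral>\<^sup>+ t. h (t + c) * indicator {0..1} t \<partial>lborel)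
       = (\<integral>\<^sup>+ t. h t * indicator {0..1} t \<partial>lborel)"
proof -
  have "(\<integral>\<^sup>+ t. h (t + c) * indicator {0..1} t \<partial>lborel)
      = (\<integral>\<^sup>+ t. h (t + c) * indicator {c..c+1} (t + c) \<partial>lborel)"
    by (intro nn_integral_cong) (auto simp: indicator_def)
  also have "\<dots> = (\<integral>\<^sup>+ t. h t * indicator {c..c+1} t \<partial>lborel)"
    by (rule nn_shift) measurable
  also have "\<dots> = (\<integral>\<^sup>+ t. h t * indicator {frac c..frac c+1} t \<partial>lborel)"
    using Q_int[of h "frac c" "floor c", OF assms] by (simp add: frac_def)
  also have "\<dots> = (\<integral>\<^sup>+ t. h t * indicator {0..1} t \<partial>lborel)"
    by (rule Q_frac) (auto simp: per frac_lt_1)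
  finally show ?thesis .
qed


lemma meas_frac_UU:
  assumes "g \<in> borel_measurable M"
  shows "(\<lambda>x. frac (g x)) \<in> measurable M UU"
  by (rule meas_into_UU) (auto intro: measurable_compose[OF assms frac_meas] less_imp_le frac_lt_1)

lemma T_distr: "distr UU UU (\<lambda>t. frac (t + c)) = UU"
proof (rule measure_eqI)
  have m: "(\<lambda>t. frac (t + c)) \<in> measurable UU UU"
    by (rule meas_frac_UU) (use meas_UU_id in measurable)
  show "sets (distr UU UU (\<lambda>t. frac (t + c))) = sets UU" by simp
  fix A assume "A \<in> sets (distr UU UU (\<lambda>t. frac (t + c)))"
  then have A: "A \<in> sets UU" by simp
  then have Ab[measurable]: "A \<in> sets borel" by (rule sets_UU_borel)
  have "{0..1::real} \<in> sets borel" by (rule borel_closed) simp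
  then have sub: "{0..1::real} \<inter> space lborel \<in> sets lborel" by simp
  have "emeasure (distr UU UU (\<lambda>t. frac (t + c))) A
     = (\<integral>\<^sup>+ t. indicator A t \<partial>distr UU UU (\<lambda>t. frac (t + c)))"
    using A by simp
  also have "\<dots> = (\<integral>\<^sup>+ t. indicator A (frac (t + c)) \<partial>UU)"
    using A by (subst nn_integral_distr[OF m]) auto
  also have "\<dots> = (\<integral>\<^sup>+ t. indicator A (frac (t + c)) * indicator {0..1} t \<partial>lborel)"
    by (rule nn_integral_restrict_space[OF sub])
  also have "\<dots> = (\<integral>\<^sup>+ t. indicator A (frac t) * indicator {0..1} t \<partial>lborel)"
    by (rule PER[where h="\<lambda>s. indicator A (frac s)"]) (auto simp: frac_1_eq)
  also have "\<dots> = (\<integral>\<^sup>+ t. indicator A t * indicator {0..1} t \<partial>lborel)"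
  proof (rule nn_integral_cong_AE)
    show "AE t in lborel. indicator A (frac t) * indicator {0..1} t = (indicator A t * indicator {0..1} t :: ennreal)"
      using AE_lborel_singleton[of 1]
    proof eventually_elim
      case (elim t) then show ?case by (auto simp: indicator_def)
    qed
  qed
  also have "\<dots> = (\<integral>\<^sup>+ t. indicator A t \<partial>UU)"
    by (rule nn_integral_restrict_space[OF sub, symmetric])
  also have "\<dots> = emeasure UU A"
    using A by simp
  finally show "emeasure (distr UU UU (\<lambda>t. frac (t + c))) A = emeasure UU A" .
qed

lemma distr_PiM_gen:
  assumes fin: "finite I"
  assumes "product_prob_space M"
  assumes "product_prob_space M'"
  assumes fm[measurable]: "\<And>i. i \<in> I \<Longrightarrow> f i \<in> measurable (M i) (M' i)"
  shows   "distr (PiM I M) (PiM I M') (\<lambda>x. \<lambda>i\<in>I. f i (x i)) = PiM I (\<lambda>i. distr (M i) (M' i) (f i))"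
proof -
  interpret M: product_prob_space M by fact
  interpret M': product_prob_space M' by fact
  define N where "N = (\<lambda>i. if i \<in> I then distr (M i) (M' i) (f i) else M' i)"
  have [intro]: "prob_space (N i)" for i
    by (auto simp: N_def intro!: M.M.prob_space_distr M'.prob_space)
  interpret N: product_prob_space N
    by (intro product_prob_spaceI) (auto simp: N_def M'.prob_space intro: M.M.prob_space_distr)
  have meas: "(\<lambda>x. \<lambda>i\<in>I. f i (x i)) \<in> Pi\<^sub>M I M \<rightarrow>\<^sub>M Pi\<^sub>M I M'"
    by measurable
  have "distr (PiM I M) (PiM I M') (\<lambda>x. \<lambda>i\<in>I. f i (x i)) = PiM I N"
  proof (rule N.PiM_eqI)
    have N_events_eq: "sets (Pi\<^sub>M I N) = sets (Pi\<^sub>M I M')"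
      unfolding N_def by (intro sets_PiM_cong) auto
    also have "\<dots> = sets (distr (Pi\<^sub>M I M) (Pi\<^sub>M I M') (\<lambda>x. \<lambda>i\<in>I. f i (x i)))"
      by simp
    finally show "sets (distr (Pi\<^sub>M I M) (Pi\<^sub>M I M') (\<lambda>x. \<lambda>i\<in>I. f i (x i))) = sets (Pi\<^sub>M I N)"  ..
    fix A assume A: "\<And>i. i \<in> I \<Longrightarrow> A i \<in> N.M.events i"
    have "emeasure (distr (Pi\<^sub>M I M) (Pi\<^sub>M I M') (\<lambda>x. \<lambda>i\<in>I. f i (x i))) (Pi\<^sub>E I A) =
          emeasure (Pi\<^sub>M I M) ((\<lambda>x. \<lambda>i\<in>I. f i (x i)) -` Pi\<^sub>E I A \<inter> space (Pi\<^sub>M I M))"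
    proof (intro emeasure_distr)
      show "(\<lambda>x. \<lambda>i\<in>I. f i (x i)) \<in> Pi\<^sub>M I M \<rightarrow>\<^sub>M Pi\<^sub>M I M'"
        by (rule meas)
      show "Pi\<^sub>E I A \<in> sets (Pi\<^sub>M I M')"
        unfolding N_events_eq [symmetric] by (intro sets_PiM_I_finite fin A)
    qed
    also have "(\<lambda>x. \<lambda>i\<in>I. f i (x i)) -` Pi\<^sub>E I A \<inter> space (Pi\<^sub>M I M) = Pi\<^sub>E I (\<lambda>i. f i -` A i \<inter> space (M i))"
      using A by (auto simp: space_PiM PiE_def Pi_def extensional_def N_def)
    also have "emeasure (Pi\<^sub>M I M) (Pi\<^sub>E I (\<lambda>i. f i -` A i \<inter> space (M i))) =
          (\<Prod>i\<in>I. emeasure (M i) (f i -` A i \<inter> space (M i)))"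
      using A by (intro M.emeasure_PiM fin) (auto simp: N_def)
    also have "\<dots> = (\<Prod>i\<in>I. emeasure (distr (M i) (M' i) (f i)) (A i))"
      using A by (intro prod.cong emeasure_distr [symmetric]) (auto simp: N_def)
    also have "\<dots> = (\<Prod>i\<in>I. emeasure (N i) (A i))"
      unfolding N_def by (intro prod.cong) (auto simp: N_def)
    finally show "emeasure (distr (Pi\<^sub>M I M) (Pi\<^sub>M I M') (\<lambda>x. \<lambda>i\<in>I. f i (x i))) (Pi\<^sub>E I A) = \<dots>" .
  qed fact+
  also have "PiM I N = PiM I (\<lambda>i. distr (M i) (M' i) (f i))"
    by (intro PiM_cong) (auto simp: N_def)
  finally show ?thesis .
qed

lemma pps_UU: "product_prob_space (\<lambda>_. UU)"
  by (rule product_prob_spaceI) (rule prob_UU)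

lemma prob_PiUU: "finite I \<Longrightarrow> prob_space (PiM I (\<lambda>_. UU))"
proof -
  assume fI: "finite I"
  interpret product_prob_space "\<lambda>_. UU" by (rule pps_UU)
  interpret finite_product_prob_space "\<lambda>_. UU" I by unfold_locales (rule fI)
  show ?thesis by (rule prob_space_axioms)
qed

lemma prob_cube: "prob_space (unit_cube L)"
  unfolding unit_cube_def by (rule prob_PiUU) simp

lemma pps_cube: "product_prob_space (\<lambda>_. unit_cube L)"
  by (rule product_prob_spaceI) (rule prob_cube)

lemma translate_cube:
  "distr (unit_cube L) (unit_cube L) (\<lambda>x. \<lambda>j\<in>{..<L}. frac (x j + c j)) = unit_cube L"
proof -
  have m: "(\<lambda>t. frac (t + c j)) \<in> measurable UU UU" for j
    by (rule meas_frac_UU) (use meas_UU_id in measurable)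
  show ?thesis unfolding unit_cube_def
    by (subst distr_PiM_gen[OF _ pps_UU pps_UU m]) (auto simp: T_distr)
qed

lemma meas_PiM_map:
  assumes fm: "\<And>i. i \<in> I \<Longrightarrow> f i \<in> measurable (M i) (M' i)"
  shows "(\<lambda>x. \<lambda>i\<in>I. f i (x i)) \<in> Pi\<^sub>M I M \<rightarrow>\<^sub>M Pi\<^sub>M I M'"
  using fm by measurable

lemma meas_comp_cube: "j < L \<Longrightarrow> (\<lambda>x. x j) \<in> borel_measurable (unit_cube L)"
proof -
  assume "j < L"
  then have "(\<lambda>x. x j) \<in> measurable (PiM {..<L} (\<lambda>_. UU)) UU"
    by (intro measurable_component_singleton) simp
  then show ?thesis unfolding unit_cube_def using meas_UU_id by (rule measurable_compose)
qed

lemma meas_H: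
  fixes f :: "nat \<Rightarrow> real \<Rightarrow> real"
  assumes cont: "\<And>j. j < L \<Longrightarrow> continuous_on UNIV (f j)" and L: "L > 0"
  shows "(\<lambda>x. \<Prod>j<L. f j (x j - x ((j + 1) mod L) + y j)) \<in> borel_measurable (unit_cube L)"
proof (rule borel_measurable_prod)
  fix j assume "j \<in> {..<L}"
  then have j: "j < L" "(j+1) mod L < L" using L by auto
  have "(\<lambda>x. x j - x ((j + 1) mod L) + y j) \<in> borel_measurable (unit_cube L)"
    using meas_comp_cube[OF j(1)] meas_comp_cube[OF j(2)] by measurable
  then show "(\<lambda>x. f j (x j - x ((j + 1) mod L) + y j)) \<in> borel_measurable (unit_cube L)"
    by (rule measurable_compose) (rule borel_measurable_continuous_onI[OF cont[OF j(1)]])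
qed

lemma gfun_shift:
  assumes L: "L > 0" and i: "i < L"
    and cont: "\<And>j. j < L \<Longrightarrow> continuous_on UNIV (f i j)"
    and per: "\<And>j t. j < L \<Longrightarrow> f i j (t + 1) = f i j t"
  shows "gfun L f i y = gfun L f i (\<lambda>j. y j + c j - c ((j+1) mod L))"
proof -
  let ?T = "\<lambda>x. \<lambda>j\<in>{..<L}. frac (x j + c j)"
  have mT: "?T \<in> measurable (unit_cube L) (unit_cube L)"
    unfolding unit_cube_def
    by (rule meas_PiM_map, rule meas_frac_UU) (use meas_UU_id in measurable)
  have "gfun L f i y = (\<integral>x. (\<Prod>j<L. f i j (x j - x ((j + 1) mod L) + y j)) \<partial>distr (unit_cube L) (unit_cube L) ?T)"
    unfolding gfun_def translate_cube ..
  also have "\<dots> = (\<integral>x. (\<Prod>j<L. f i j (?T x j - ?T x ((j + 1) mod L) + y j)) \<partial>unit_cube L)"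
    by (rule integral_distr[OF mT meas_H[OF cont L]])
  also have "\<dots> = gfun L f i (\<lambda>j. y j + c j - c ((j+1) mod L))"
  proof -
    have pt: "f i j (?T x j - ?T x ((j + 1) mod L) + y j) = f i j (x j - x ((j + 1) mod L) + (y j + c j - c ((j + 1) mod L)))"
      if "j < L" for x j
    proof -
      have j: "j < L" "(j+1) mod L < L" using L that by auto
      define k where "k = (j+1) mod L"
      have "?T x j - ?T x k + y j = (x j - x k + (y j + c j - c k)) + real_of_int (floor (x k + c k) - floor (x j + c j))"
        using j by (simp add: k_def frac_def)
      then have "f i j (?T x j - ?T x k + y j) = f i j ((x j - x k + (y j + c j - c k)) + real_of_int (floor (x k + c k) - floor (x j + c j)))"
        by (rule arg_cong)
      also have "\<dots> = f i j (x j - x k + (y j + c j - c k))"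
        by (rule per_int[where h="f i j", OF per[OF j(1)]])
      finally show ?thesis unfolding k_def .
    qed
    show ?thesis unfolding gfun_def using pt by (auto intro!: integral_cong prod.cong)
  qed
  finally show ?thesis .
qed

lemma gfun_cong: "(\<And>j. j < L \<Longrightarrow> y j = y' j) \<Longrightarrow> gfun L f i y = gfun L f i y'"
  unfolding gfun_def by (auto intro!: integral_cong prod.cong)

lemma gfun_sum:
  assumes L: "L > 0" and i: "i < L"
    and cont: "\<And>j. j < L \<Longrightarrow> continuous_on UNIV (f i j)"
    and per: "\<And>j t. j < L \<Longrightarrow> f i j (t + 1) = f i j t"
  shows "gfun L f i y = gfun L f i (\<lambda>j. if j = 0 then (\<Sum>k<L. y k) else 0)"
proof -
  define s where "s = (\<Sum>k<L. y k)"
  define t where "t = (\<lambda>j. (if j = 0 then s else 0) - y j)"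
  define c where "c = (\<lambda>k. - (\<Sum>j<k. t j))"
  have tsum: "(\<Sum>j<L. t j) = 0"
    using L by (simp add: t_def sum_subtractf s_def sum.delta)
  have key: "y j + c j - c ((j+1) mod L) = (if j = 0 then s else 0)" if j: "j < L" for j
  proof (cases "j + 1 < L")
    case True
    then have "c j - c ((j+1) mod L) = t j" by (simp add: c_def)
    then show ?thesis by (simp add: t_def)
  next
    case False
    then have jL: "j + 1 = L" using j by simp
    then have "(j+1) mod L = 0" by simp
    moreover have "(\<Sum>j<L. t j) = (\<Sum>k<j. t k) + t j" using jL sum.lessThan_Suc[of t j] by simp
    ultimately have "c j - c ((j+1) mod L) = t j" using tsum by (simp add: c_def)
    then show ?thesis by (simp add: t_def)
  qed
  have "gfun L f i y = gfun L f i (\<lambda>j. y j + c j - c ((j+1) mod L))"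
    by (rule gfun_shift[where f=f and i=i, OF L i cont per])
  also have "\<dots> = gfun L f i (\<lambda>j. if j = 0 then s else 0)"
    by (rule gfun_cong) (rule key)
  finally show ?thesis by (simp only: s_def)
qed

lemma distr_pair_UU:
  assumes P1: "prob_space M1" and P2: "prob_space M2"
    and phi[measurable]: "phi \<in> measurable (M1 \<Otimes>\<^sub>M M2) UU"
    and sl: "\<And>b. b \<in> space M2 \<Longrightarrow> distr M1 UU (\<lambda>a. phi (a, b)) = UU"
  shows "distr (M1 \<Otimes>\<^sub>M M2) UU phi = UU"
proof (rule measure_eqI)
  interpret M1: prob_space M1 by (rule P1)
  interpret M2: prob_space M2 by (rule P2)
  interpret P: pair_sigma_finite M1 M2 ..
  show "sets (distr (M1 \<Otimes>\<^sub>M M2) UU phi) = sets UU" by simp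
  fix A assume "A \<in> sets (distr (M1 \<Otimes>\<^sub>M M2) UU phi)"
  then have A[measurable]: "A \<in> sets UU" by simp
  have pre: "phi -` A \<inter> space (M1 \<Otimes>\<^sub>M M2) \<in> sets (M1 \<Otimes>\<^sub>M M2)" by measurable
  have "emeasure (distr (M1 \<Otimes>\<^sub>M M2) UU phi) A = emeasure (M1 \<Otimes>\<^sub>M M2) (phi -` A \<inter> space (M1 \<Otimes>\<^sub>M M2))"
    by (rule emeasure_distr[OF phi A])
  also have "\<dots> = (\<integral>\<^sup>+y. emeasure M1 ((\<lambda>x. (x, y)) -` (phi -` A \<inter> space (M1 \<Otimes>\<^sub>M M2))) \<partial>M2)"
    by (rule P.emeasure_pair_measure_alt2[OF pre])
  also have "\<dots> = (\<integral>\<^sup>+y. emeasure UU A \<partial>M2)"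
  proof (rule nn_integral_cong)
    fix b assume b: "b \<in> space M2"
    have mb: "(\<lambda>a. phi (a, b)) \<in> measurable M1 UU"
      using b by measurable
    have "(\<lambda>x. (x, b)) -` (phi -` A \<inter> space (M1 \<Otimes>\<^sub>M M2)) = (\<lambda>a. phi (a, b)) -` A \<inter> space M1"
      using b by (auto simp: space_pair_measure)
    then have "emeasure M1 ((\<lambda>x. (x, b)) -` (phi -` A \<inter> space (M1 \<Otimes>\<^sub>M M2)))
        = emeasure (distr M1 UU (\<lambda>a. phi (a, b))) A"
      by (simp add: emeasure_distr[OF mb A])
    also have "\<dots> = emeasure UU A" using sl[OF b] by simp
    finally show "emeasure M1 ((\<lambda>x. (x, b)) -` (phi -` A \<inter> space (M1 \<Otimes>\<^sub>M M2))) = emeasure UU A" .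
  qed
  also have "\<dots> = emeasure UU A"
    by (simp add: M2.emeasure_space_1)
  finally show "emeasure (distr (M1 \<Otimes>\<^sub>M M2) UU phi) A = emeasure UU A" .
qed

lemma meas_sum_cube: "(\<lambda>y. frac (\<Sum>j<L. y j)) \<in> measurable (unit_cube L) UU"
  by (rule meas_frac_UU) (auto intro!: borel_measurable_sum meas_comp_cube)

lemma sum_distr:
  assumes L: "L > 0"
  shows "distr (unit_cube L) UU (\<lambda>y. frac (\<Sum>j<L. y j)) = UU"
proof -
  interpret P: product_prob_space "\<lambda>_::nat. UU" by (rule pps_UU)
  define J where "J = {..<L} - {0}"
  have IJ: "{0} \<inter> J = {}" "finite J" "{0} \<union> J = {..<L}" using L by (auto simp: J_def)
  have cube: "unit_cube L = distr (PiM {0} (\<lambda>_. UU) \<Otimes>\<^sub>M PiM J (\<lambda>_. UU)) (unit_cube L) (merge {0} J)"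
    unfolding unit_cube_def using P.distr_merge[OF IJ(1) _ IJ(2)] IJ(3) by simp
  have mm: "merge {0} J \<in> measurable (PiM {0} (\<lambda>_. UU) \<Otimes>\<^sub>M PiM J (\<lambda>_. UU)) (unit_cube L)"
    unfolding unit_cube_def IJ(3)[symmetric] by (rule measurable_merge)
  have "distr (unit_cube L) UU (\<lambda>y. frac (\<Sum>j<L. y j))
      = distr (PiM {0} (\<lambda>_. UU) \<Otimes>\<^sub>M PiM J (\<lambda>_. UU)) UU ((\<lambda>y. frac (\<Sum>j<L. y j)) \<circ> merge {0} J)"
    by (subst cube) (rule distr_distr[OF meas_sum_cube mm])
  also have "\<dots> = UU"
  proof (rule distr_pair_UU)
    show "prob_space (PiM {0} (\<lambda>_. UU))" "prob_space (PiM J (\<lambda>_. UU))"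
      using IJ(2) by (auto intro!: prob_PiUU)
    show "(\<lambda>y. frac (\<Sum>j<L. y j)) \<circ> merge {0} J \<in> measurable (PiM {0} (\<lambda>_. UU) \<Otimes>\<^sub>M PiM J (\<lambda>_. UU)) UU"
      by (rule measurable_comp[OF mm meas_sum_cube])
    fix b assume b: "b \<in> space (PiM J (\<lambda>_. UU))"
    have "distr (PiM {0} (\<lambda>_. UU)) UU (\<lambda>a. ((\<lambda>y. frac (\<Sum>j<L. y j)) \<circ> merge {0} J) (a, b))
        = distr (PiM {0} (\<lambda>_. UU)) UU ((\<lambda>t. frac (t + (\<Sum>j\<in>J. b j))) \<circ> (\<lambda>a. a (0::nat)))"
    proof -
      have pt: "((\<lambda>y. frac (\<Sum>j<L. y j)) \<circ> merge {0} J) (a, b) = ((\<lambda>t. frac (t + (\<Sum>j\<in>J. b j))) \<circ> (\<lambda>a. a (0::nat))) a" for a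
      proof -
        have "(\<Sum>j<L. merge {0} J (a, b) j) = (\<Sum>j\<in>{0} \<union> J. merge {0} J (a, b) j)" using IJ(3) by simp
        also have "\<dots> = a 0 + (\<Sum>j\<in>J. b j)"
          using IJ by (subst sum.union_disjoint) (auto intro!: sum.cong)
        finally show ?thesis by simp
      qed
      have "(\<lambda>a. ((\<lambda>y. frac (\<Sum>j<L. y j)) \<circ> merge {0} J) (a, b)) = (\<lambda>t. frac (t + (\<Sum>j\<in>J. b j))) \<circ> (\<lambda>a. a (0::nat))"
        using pt by (simp add: fun_eq_iff del: comp_apply)
      then show ?thesis by simp
    qed
    also have "\<dots> = distr (distr (PiM {0} (\<lambda>_. UU)) UU (\<lambda>a. a (0::nat))) UU (\<lambda>t. frac (t + (\<Sum>j\<in>J. b j)))"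
    proof (rule distr_distr[symmetric])
      show "(\<lambda>t. frac (t + (\<Sum>j\<in>J. b j))) \<in> measurable UU UU"
        by (rule meas_frac_UU) (use meas_UU_id in measurable)
      show "(\<lambda>a. a (0::nat)) \<in> measurable (PiM {0} (\<lambda>_. UU)) UU"
        by (rule measurable_component_singleton) simp
    qed
    also have "\<dots> = UU"
      using P.distr_singleton[of 0] by (simp add: T_distr)
    finally show "distr (PiM {0} (\<lambda>_. UU)) UU (\<lambda>a. ((\<lambda>y. frac (\<Sum>j<L. y j)) \<circ> merge {0} J) (a, b)) = UU" .
  qed
  finally show ?thesis .
qed

lemma G_per:
  assumes per: "\<And>j t. j < L \<Longrightarrow> f i j (t + 1) = f i j t" and L: "L > 0"
  shows "gfun L f i (\<lambda>j. if j = 0 then s + 1 else 0) = gfun L f i (\<lambda>j. if j = 0 then s else 0)"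
proof -
  have pt: "f i j (x j - x ((j + 1) mod L) + (if j = 0 then s + 1 else 0)) = f i j (x j - x ((j + 1) mod L) + (if j = 0 then s else 0))"
    if j: "j < L" for x j
  proof (cases "j = 0")
    case True
    have e: "x j - x ((j + 1) mod L) + (if j = 0 then s + 1 else 0) = (x j - x ((j + 1) mod L) + (if j = 0 then s else 0)) + 1"
      using True by simp
    show ?thesis unfolding e by (rule per[OF j])
  qed simp
  show ?thesis unfolding gfun_def using pt by (auto intro!: integral_cong prod.cong)
qed

lemma meas_G:
  assumes cont: "\<And>j. j < L \<Longrightarrow> continuous_on UNIV (f i j)" and L: "L > 0"
  shows "(\<lambda>s. gfun L f i (\<lambda>j. if j = 0 then s else 0)) \<in> borel_measurable borel"
proof -
  interpret C: prob_space "unit_cube L" by (rule prob_cube)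
  have c: "(\<lambda>p. snd p k) \<in> borel_measurable (borel \<Otimes>\<^sub>M unit_cube L)" if "k < L" for k
    by (rule measurable_compose[OF measurable_snd meas_comp_cube[OF that]])
  have fs: "(\<lambda>p. fst p) \<in> borel_measurable (borel \<Otimes>\<^sub>M unit_cube L)"
    by (rule measurable_fst'') (rule measurable_ident_sets, simp)
  have "(\<lambda>p. \<Prod>j<L. f i j (snd p j - snd p ((j + 1) mod L) + (if j = 0 then fst p else 0)))
      \<in> borel_measurable (borel \<Otimes>\<^sub>M unit_cube L)"
  proof (rule borel_measurable_prod)
    fix j assume "j \<in> {..<L}"
    then have j: "j < L" "(j+1) mod L < L" using L by auto
    have "(\<lambda>p. snd p j - snd p ((j + 1) mod L) + (if j = 0 then fst p else 0)) \<in> borel_measurable (borel \<Otimes>\<^sub>M unit_cube L)"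
      using c[OF j(1)] c[OF j(2)] fs by measurable
    then show "(\<lambda>p. f i j (snd p j - snd p ((j + 1) mod L) + (if j = 0 then fst p else 0))) \<in> borel_measurable (borel \<Otimes>\<^sub>M unit_cube L)"
      by (rule measurable_compose) (rule borel_measurable_continuous_onI[OF cont[OF j(1)]])
  qed
  then have "(\<lambda>(s, x). \<Prod>j<L. f i j (x j - x ((j + 1) mod L) + (if j = 0 then s else 0)))
      \<in> borel_measurable (borel \<Otimes>\<^sub>M unit_cube L)"
    by (simp add: split_beta')
  then show ?thesis
    unfolding gfun_def by (rule C.borel_measurable_lebesgue_integral)
qed

theorem lemma2:
  fixes L :: nat and f :: "nat \<Rightarrow> nat \<Rightarrow> real \<Rightarrow> real"
  assumes "L \<ge> 2"
    and "\<And>i j. i < L \<Longrightarrow> j < L \<Longrightarrow> continuous_on UNIV (f i j)"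
    and "\<And>i j t. i < L \<Longrightarrow> j < L \<Longrightarrow> f i j (t + 1) = f i j t"
  shows "(\<integral>Y. (\<Prod>i<L. gfun L f i (\<lambda>j. Y ((i + 1) mod L) j - Y i j))
            \<partial>PiM {..<L} (\<lambda>_. unit_cube L))
       = (\<integral>y. (\<Prod>i<L. gfun L f i (\<lambda>j. if j = 0 then y ((i + 1) mod L) - y i else 0))
            \<partial>unit_cube L)"
proof -
  have L: "L > 0" using assms(1) by simp
  define G where "G = (\<lambda>i s. gfun L f i (\<lambda>j. if j = 0 then s else 0))"
  define K where "K = (\<lambda>s::nat \<Rightarrow> real. \<Prod>i<L. G i (s ((i + 1) mod L) - s i))"
  define T where "T = (\<lambda>Y::nat \<Rightarrow> nat \<Rightarrow> real. \<lambda>i\<in>{..<L}. frac (\<Sum>j<L. Y i j))"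
  have Gper: "G i (a + real_of_int k) = G i a" if i: "i < L" for i a k
    by (rule per_int) (simp add: G_def G_per[where f=f and i=i, OF assms(3)[OF i] L])
  have Gm: "G i \<in> borel_measurable borel" if i: "i < L" for i
    unfolding G_def by (rule meas_G[where f=f and i=i, OF assms(2)[OF i] L])
  have Km: "K \<in> borel_measurable (unit_cube L)"
    unfolding K_def
  proof (rule borel_measurable_prod)
    fix i assume "i \<in> {..<L}"
    then have i: "i < L" "(i+1) mod L < L" using L by auto
    have "(\<lambda>s. s ((i + 1) mod L) - s i) \<in> borel_measurable (unit_cube L)"
      using meas_comp_cube[OF i(1)] meas_comp_cube[OF i(2)] by measurable
    then show "(\<lambda>s. G i (s ((i + 1) mod L) - s i)) \<in> borel_measurable (unit_cube L)"
      by (rule measurable_compose) (rule Gm[OF i(1)])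
  qed
  have Tm: "T \<in> measurable (PiM {..<L} (\<lambda>_. unit_cube L)) (unit_cube L)"
  proof -
    have "T \<in> measurable (PiM {..<L} (\<lambda>_. unit_cube L)) (PiM {..<L} (\<lambda>_. UU))"
      unfolding T_def by (rule meas_PiM_map) (rule meas_sum_cube)
    then show ?thesis by (simp only: unit_cube_def[symmetric])
  qed
  have Td: "distr (PiM {..<L} (\<lambda>_. unit_cube L)) (unit_cube L) T = unit_cube L"
  proof -
    have "distr (PiM {..<L} (\<lambda>_. unit_cube L)) (PiM {..<L} (\<lambda>_. UU)) T
        = PiM {..<L} (\<lambda>_. distr (unit_cube L) UU (\<lambda>y. frac (\<Sum>j<L. y j)))"
      unfolding T_def by (rule distr_PiM_gen[OF _ pps_cube pps_UU meas_sum_cube]) simp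
    then have "distr (PiM {..<L} (\<lambda>_. unit_cube L)) (PiM {..<L} (\<lambda>_. UU)) T = PiM {..<L} (\<lambda>_. UU)"
      by (simp only: sum_distr[OF L])
    then show ?thesis by (simp only: unit_cube_def[symmetric])
  qed
  have pt: "(\<Prod>i<L. gfun L f i (\<lambda>j. Y ((i + 1) mod L) j - Y i j)) = K (T Y)" for Y
    unfolding K_def
  proof (rule prod.cong[OF refl])
    fix i assume "i \<in> {..<L}"
    then have i: "i < L" "(i+1) mod L < L" using L by auto
    define k where "k = (i + 1) mod L"
    have "gfun L f i (\<lambda>j. Y k j - Y i j) = G i (\<Sum>j<L. Y k j - Y i j)"
      unfolding G_def by (rule gfun_sum[where f=f and i=i, OF L i(1) assms(2)[OF i(1)] assms(3)[OF i(1)]])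
    also have "(\<Sum>j<L. Y k j - Y i j) = (T Y k - T Y i) + real_of_int (floor (\<Sum>j<L. Y k j) - floor (\<Sum>j<L. Y i j))"
      using i by (simp add: T_def k_def frac_def sum_subtractf)
    also have "G i \<dots> = G i (T Y k - T Y i)" by (rule Gper[OF i(1)])
    finally show "gfun L f i (\<lambda>j. Y ((i + 1) mod L) j - Y i j) = G i (T Y ((i + 1) mod L) - T Y i)"
      unfolding k_def .
  qed
  have "(\<integral>Y. (\<Prod>i<L. gfun L f i (\<lambda>j. Y ((i + 1) mod L) j - Y i j)) \<partial>PiM {..<L} (\<lambda>_. unit_cube L))
      = (\<integral>Y. K (T Y) \<partial>PiM {..<L} (\<lambda>_. unit_cube L))"
    by (simp only: pt)
  also have "\<dots> = (\<integral>y. K y \<partial>distr (PiM {..<L} (\<lambda>_. unit_cube L)) (unit_cube L) T)"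
    by (rule integral_distr[OF Tm Km, symmetric])
  also have "\<dots> = (\<integral>y. K y \<partial>unit_cube L)" by (simp only: Td)
  also have "\<dots> = (\<integral>y. (\<Prod>i<L. gfun L f i (\<lambda>j. if j = 0 then y ((i + 1) mod L) - y i else 0)) \<partial>unit_cube L)"
    unfolding K_def G_def ..
  finally show ?thesis .
qed

end
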